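(* For every integer $n>2$, the number of pairs $(s,t)\in S_n\times S_n$ such that $[s,t]=sts^{-1}t^{-1}$ is a $3$-cycle and $s$ is an $n$-cycle equals $\binom{n}{3}\, n!$.
   Context: $S_n$ is the symmetric group on $\{1,\dots,n\}$; permutations compose as functions. *)

theory Defs
  imports "HOL-Combinatorics.Combinatorics"
begin

definition is_k_cycle :: "nat \<Rightarrow> (nat \<Rightarrow> nat) \<Rightarrow> bool" where
  "is_k_cycle k p \<longleftrightarrow> (\<exists>xs. distinct xs \<and> length xs = k \<and> p = cycle_of_list xs)"

definition commutator :: "(nat \<Rightarrow> nat) \<Rightarrow> (nat \<Rightarrow> nat) \<Rightarrow> (nat \<Rightarrow> nat)" where
  "commutator s t = s \<circ> t \<circ> inv s \<circ> inv t"

end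

theory Submission
  imports Defs "HOL-Combinatorics.Multiset_Permutations"
begin

lemma cyc_nth:
  assumes "distinct xs" "m < length xs"
  shows "cycle_of_list xs (xs!m) = xs!(Suc m mod length xs)"
proof -
  have "map (cycle_of_list xs) xs = rotate1 xs" using cyclic_rotation[OF assms(1), of 1] by simp
  hence "cycle_of_list xs (xs!m) = rotate1 xs ! m" using assms(2) by (metis nth_map)
  thus ?thesis using nth_rotate1[OF assms(2)] by simp
qed

lemma cyc_pow_nth:
  assumes "distinct xs" "m < length xs"
  shows "(cycle_of_list xs ^^ k) (xs!m) = xs!((k + m) mod length xs)"
proof -
  have "(cycle_of_list xs ^^ k) (xs!m) = rotate k xs ! m"
    using cyclic_rotation[OF assms(1), of k] assms(2) by (metis nth_map)
  thus ?thesis using nth_rotate[OF assms(2)] by simp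
qed

lemma cyc_eqI:
  assumes "distinct ys" "p permutes set ys"
    and "\<And>m. m < length ys \<Longrightarrow> p (ys!m) = ys!(Suc m mod length ys)"
  shows "p = cycle_of_list ys"
proof
  fix x show "p x = cycle_of_list ys x"
  proof (cases "x \<in> set ys")
    case True
    then obtain m where "m < length ys" "x = ys!m" by (auto simp: in_set_conv_nth)
    thus ?thesis using assms(3) cyc_nth[OF assms(1)] by simp
  next
    case False
    thus ?thesis using assms(2) id_outside_supp by (metis permutes_not_in)
  qed
qed

lemma cyc_moves:
  assumes "distinct xs" "length xs \<ge> 2" "x \<in> set xs"
  shows "cycle_of_list xs x \<noteq> x"
proof -
  obtain m where m: "m < length xs" "x = xs!m" using assms(3) by (auto simp: in_set_conv_nth)
  have "Suc m mod length xs \<noteq> m"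
  proof (cases "Suc m < length xs")
    case True thus ?thesis by simp
  next
    case False hence "Suc m = length xs" using m by simp
    thus ?thesis using assms(2) by simp
  qed
  moreover have "Suc m mod length xs < length xs" using m(1) by (intro mod_less_divisor) auto
  ultimately show ?thesis using m cyc_nth[OF assms(1) m(1)] nth_eq_iff_index_eq[OF assms(1)] by metis
qed

lemma cyc3:
  assumes "distinct [a,b,d]"
  shows "cycle_of_list [a,b,d] = (\<lambda>x. if x=a then b else if x=b then d else if x=d then a else x)"
  using assms by (auto simp: fun_eq_iff Transposition.transpose_def)



lemma mod_shift_ne:
  fixes j r n :: nat
  assumes "0 < j" "j < n" "r < n"
  shows "(j + r) mod n \<noteq> r"
proof (cases "j + r < n")
  case True thus ?thesis using assms by simp
next
  case False
  hence "(j + r) mod n = j + r - n" using assms by (simp add: le_mod_geq)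
  thus ?thesis using assms False by auto
qed

lemma kcycle_set:
  assumes "is_k_cycle n q" "q permutes S" "finite S" "card S = n" "n \<ge> 2"
  obtains zs where "distinct zs" "length zs = n" "q = cycle_of_list zs" "set zs = S"
proof -
  obtain zs where zs: "distinct zs" "length zs = n" "q = cycle_of_list zs"
    using assms(1) unfolding is_k_cycle_def by blast
  have "set zs \<subseteq> S"
  proof
    fix z assume "z \<in> set zs"
    hence "q z \<noteq> z" using cyc_moves[OF zs(1)] zs assms(5) by simp
    thus "z \<in> S" using assms(2) by (meson permutes_not_in)
  qed
  moreover have "card (set zs) = card S" using zs assms(4) by (simp add: distinct_card)
  ultimately have "set zs = S" using assms(3) by (simp add: card_subset_eq)
  thus ?thesis using that zs by blast
qed

lemma good_cycle:
  assumes xs: "distinct xs" "length xs = n" and jk: "0 < j" "j < k" "k < n"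
  shows "is_k_cycle n (cycle_of_list [xs!0, xs!j, xs!k] \<circ> cycle_of_list xs)"
proof -
  have eqI: "a < n \<Longrightarrow> b < n \<Longrightarrow> (xs!a = xs!b) = (a = b)" for a b
    using nth_eq_iff_index_eq[OF xs(1)] xs(2) by simp
  define g where "g m = (if m < j then m else if m < j + (n-k) then m + k - j else m - (n-k))" for m
  define ys where "ys = map (\<lambda>m. xs!(g m)) [0..<n]"
  define q where "q = cycle_of_list [xs!0, xs!j, xs!k] \<circ> cycle_of_list xs"
  have glt: "m < n \<Longrightarrow> g m < n" for m using jk unfolding g_def by auto
  have ginj: "inj_on g {0..<n}" using jk unfolding g_def inj_on_def by (auto split: if_splits)
  have dys: "distinct ys" unfolding ys_def distinct_map
  proof
    show "inj_on (\<lambda>m. xs ! g m) (set [0..<n])"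
      using ginj glt eqI unfolding inj_on_def by auto
  qed simp
  have lys: "length ys = n" unfolding ys_def by simp
  have "set ys \<subseteq> set xs" unfolding ys_def using glt xs(2) by auto
  moreover have "card (set ys) = card (set xs)" using dys xs lys by (simp add: distinct_card)
  ultimately have sys: "set ys = set xs" by (simp add: card_subset_eq)
  have d3: "distinct [xs!0, xs!j, xs!k]" using jk eqI by auto
  have c1: "cycle_of_list [xs!0, xs!j, xs!k] = (\<lambda>x. if x=xs!0 then xs!j else if x=xs!j then xs!k else if x=xs!k then xs!0 else x)"
    using cyc3[OF d3] .
  have "set [xs!0, xs!j, xs!k] \<subseteq> set xs" using jk xs(2) by auto
  hence qp: "q permutes set xs" unfolding q_def
    by (meson cycle_permutes permutes_compose permutes_subset)
  have step: "q (ys!m) = ys!(Suc m mod n)" if m: "m < n" for m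
  proof -
    have s: "cycle_of_list xs (xs!(g m)) = xs!(Suc (g m) mod n)"
      using cyc_nth[OF xs(1)] glt[OF m] xs(2) by simp
    have "q (ys!m) = cycle_of_list [xs!0, xs!j, xs!k] (xs!(Suc (g m) mod n))"
      unfolding q_def ys_def using m s by simp
    also have "\<dots> = xs!(g (Suc m mod n))"
    proof -
      consider "Suc m < j" | "Suc m = j" | "j \<le> m" "Suc m < j + (n-k)" | "j \<le> m" "Suc m = j + (n-k)"
        | "j + (n-k) \<le> m" "Suc m < n" | "Suc m = n" using m jk by linarith
      thus ?thesis
      proof cases
        case 1 thus ?thesis unfolding c1 using jk m by (auto simp: g_def eqI)
      next
        case 2 thus ?thesis unfolding c1 using jk m by (auto simp: g_def eqI)
      next
        case 3 thus ?thesis unfolding c1 using jk m by (auto simp: g_def eqI)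
      next
        case 4
        hence "Suc (g m) = n" using jk by (simp add: g_def)
        hence e: "Suc (g m) mod n = 0" by simp
        have "g (Suc m mod n) = j" using 4 jk by (simp add: g_def)
        thus ?thesis unfolding c1 e using jk by (auto simp: eqI)
      next
        case 5 thus ?thesis unfolding c1 using jk m by (auto simp: g_def eqI)
      next
        case 6 thus ?thesis unfolding c1 using jk m by (auto simp: g_def eqI)
      qed
    qed
    also have "\<dots> = ys!(Suc m mod n)" unfolding ys_def using m jk by simp
    finally show ?thesis .
  qed
  have "q = cycle_of_list ys"
    by (rule cyc_eqI[OF dys]) (use qp sys step lys in auto)
  thus ?thesis unfolding is_k_cycle_def q_def using dys lys by blast
qed

lemma bad_cycle:
  assumes xs: "distinct xs" "length xs = n" and jk: "0 < j" "j < k" "k < n"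
  shows "\<not> is_k_cycle n (cycle_of_list [xs!0, xs!k, xs!j] \<circ> cycle_of_list xs)"
proof
  have eqI: "a < n \<Longrightarrow> b < n \<Longrightarrow> (xs!a = xs!b) = (a = b)" for a b
    using nth_eq_iff_index_eq[OF xs(1)] xs(2) by simp
  define q where "q = cycle_of_list [xs!0, xs!k, xs!j] \<circ> cycle_of_list xs"
  have d3: "distinct [xs!0, xs!k, xs!j]" using jk eqI by auto
  have c2: "cycle_of_list [xs!0, xs!k, xs!j] = (\<lambda>x. if x=xs!0 then xs!k else if x=xs!k then xs!j else if x=xs!j then xs!0 else x)"
    using cyc3[OF d3] .
  have s: "a < n \<Longrightarrow> cycle_of_list xs (xs!a) = xs!(Suc a mod n)" for a
    using cyc_nth[OF xs(1)] xs(2) by simp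
  have pw: "m < j \<Longrightarrow> (q^^m) (xs!0) = xs!m" for m
  proof (induction m)
    case 0 thus ?case by simp
  next
    case (Suc m)
    hence "(q^^Suc m) (xs!0) = q (xs!m)" by simp
    also have "\<dots> = xs!(Suc m)" unfolding q_def using Suc.prems jk s[of m] by (simp add: c2 eqI)
    finally show ?case .
  qed
  have "(q^^j) (xs!0) = q ((q^^(j-1)) (xs!0))" using jk by (metis Suc_pred' funpow.simps(2) o_apply)
  also have "\<dots> = q (xs!(j-1))" using pw jk by simp
  also have "\<dots> = xs!0" unfolding q_def using jk s[of "j-1"] by (simp add: c2 eqI)
  finally have fix0: "(q^^j) (xs!0) = xs!0" .
  assume "is_k_cycle n (cycle_of_list [xs!0, xs!k, xs!j] \<circ> cycle_of_list xs)"
  hence kc: "is_k_cycle n q" unfolding q_def .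
  have "set [xs!0, xs!k, xs!j] \<subseteq> set xs" using jk xs(2) by auto
  hence qp: "q permutes set xs" unfolding q_def
    by (meson cycle_permutes permutes_compose permutes_subset)
  obtain zs where zs: "distinct zs" "length zs = n" "q = cycle_of_list zs" "set zs = set xs"
    using kcycle_set[OF kc qp] xs jk by (auto simp: distinct_card)
  have "xs!0 \<in> set zs" using zs(4) xs jk by auto
  then obtain r where r: "r < n" "xs!0 = zs!r" using zs(2) by (auto simp: in_set_conv_nth)
  have "(q^^j) (zs!r) = zs!((j + r) mod n)" using cyc_pow_nth[OF zs(1), of r j] r zs(2) zs(3) by simp
  moreover have "zs!((j + r) mod n) \<noteq> zs!r"
    using nth_eq_iff_index_eq[OF zs(1)] zs(2) r mod_shift_ne[of j n r] jk by simp
  ultimately show False using fix0 r by simp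
qed



lemma rot_facts:
  assumes "distinct xs" "length xs = n" "i < n"
  shows "rotate i xs ! 0 = xs ! i" "\<And>m. i \<le> m \<Longrightarrow> m < n \<Longrightarrow> rotate i xs ! (m - i) = xs ! m"
    "cycle_of_list (rotate i xs) = cycle_of_list xs" "distinct (rotate i xs)" "length (rotate i xs) = n"
proof -
  show "rotate i xs ! 0 = xs ! i" using assms nth_rotate[of 0 xs i] by simp
  show "rotate i xs ! (m - i) = xs ! m" if "i \<le> m" "m < n" for m
    using assms that nth_rotate[of "m - i" xs i] by simp
  show "cycle_of_list (rotate i xs) = cycle_of_list xs"
    using cycle_of_list_rotate_independent[OF assms(1)] by simp
qed (use assms in auto)

lemma good_cycle_gen:
  assumes xs: "distinct xs" "length xs = n" and ijk: "i < j" "j < k" "k < n"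
  shows "is_k_cycle n (cycle_of_list [xs!i, xs!j, xs!k] \<circ> cycle_of_list xs)"
proof -
  have "i < n" using ijk by simp
  note r = rot_facts[OF xs this]
  have "is_k_cycle n (cycle_of_list [rotate i xs!0, rotate i xs!(j-i), rotate i xs!(k-i)] \<circ> cycle_of_list (rotate i xs))"
    using good_cycle[OF r(4,5), of "j-i" "k-i"] ijk by simp
  thus ?thesis using r(1,3) r(2)[of j] r(2)[of k] ijk by simp
qed

lemma bad_cycle_gen:
  assumes xs: "distinct xs" "length xs = n" and ijk: "i < j" "j < k" "k < n"
  shows "\<not> is_k_cycle n (cycle_of_list [xs!i, xs!k, xs!j] \<circ> cycle_of_list xs)"
proof -
  have "i < n" using ijk by simp
  note r = rot_facts[OF xs this]
  have "\<not> is_k_cycle n (cycle_of_list [rotate i xs!0, rotate i xs!(k-i), rotate i xs!(j-i)] \<circ> cycle_of_list (rotate i xs))"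
    using bad_cycle[OF r(4,5), of "j-i" "k-i"] ijk by simp
  thus ?thesis using r(1,3) r(2)[of j] r(2)[of k] ijk by simp
qed

lemma inv_cyc3:
  assumes "distinct [a,b,d]"
  shows "inv (cycle_of_list [a,b,d]) = cycle_of_list [a,d,b]"
proof (rule inv_unique_comp)
  have d2: "distinct [a,d,b]" using assms by auto
  show "cycle_of_list [a, b, d] \<circ> cycle_of_list [a, d, b] = id"
    unfolding cyc3[OF assms] cyc3[OF d2] using assms by (auto simp: fun_eq_iff)
  show "cycle_of_list [a, d, b] \<circ> cycle_of_list [a, b, d] = id"
    unfolding cyc3[OF assms] cyc3[OF d2] using assms by (auto simp: fun_eq_iff)
qed

lemma rot3:
  assumes "distinct [a,b,d]"
  shows "cycle_of_list [a,b,d] = cycle_of_list [b,d,a]"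
proof -
  have d2: "distinct [b,d,a]" using assms by auto
  show ?thesis unfolding cyc3[OF assms] cyc3[OF d2] using assms by (auto simp: fun_eq_iff)
qed

lemma moved_cyc3:
  assumes "distinct [a,b,d]"
  shows "{x. cycle_of_list [a,b,d] x \<noteq> x} = {a,b,d}"
  unfolding cyc3[OF assms] using assms by auto

lemma card_pairs: "card {(i,j). i < j \<and> j < (n::nat)} = n choose 2"
proof (induction n)
  case 0 thus ?case by simp
next
  case (Suc n)
  have e: "{(i,j). i < j \<and> j < Suc n} = {(i,j). i < j \<and> j < n} \<union> (\<lambda>i. (i,n)) ` {..<n}"
    by auto
  have f: "finite {(i,j). i < j \<and> j < (n::nat)}"
    by (rule finite_subset[of _ "{..<n} \<times> {..<n}"]) auto
  have "card {(i,j). i < j \<and> j < Suc n} = card {(i,j). i < j \<and> j < n} + card ((\<lambda>i. (i,n)) ` {..<n})"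
    unfolding e by (rule card_Un_disjoint) (use f in auto)
  also have "card ((\<lambda>i. (i,n)) ` {..<n}) = n" by (subst card_image) (auto simp: inj_on_def)
  finally show ?case using Suc.IH by (simp add: numeral_2_eq_2)
qed

lemma card_triples: "card {(i,j,k). i < j \<and> j < k \<and> k < (n::nat)} = n choose 3"
proof (induction n)
  case 0 thus ?case by simp
next
  case (Suc n)
  have e: "{(i,j,k). i < j \<and> j < k \<and> k < Suc n} = {(i,j,k). i < j \<and> j < k \<and> k < n} \<union> (\<lambda>(i,j). (i,j,n)) ` {(i,j). i < j \<and> j < n}"
  proof (rule set_eqI, rule iffI)
    fix x assume "x \<in> {(i,j,k). i < j \<and> j < k \<and> k < Suc n}"
    then obtain i j k where x: "x = (i,j,k)" "i < j" "j < k" "k < Suc n" by auto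
    show "x \<in> {(i,j,k). i < j \<and> j < k \<and> k < n} \<union> (\<lambda>(i,j). (i,j,n)) ` {(i,j). i < j \<and> j < n}"
    proof (cases "k < n")
      case True thus ?thesis using x by auto
    next
      case False hence "k = n" using x by simp
      hence "x = (\<lambda>(i,j). (i,j,n)) (i,j)" using x by simp
      moreover have "(i,j) \<in> {(i,j). i < j \<and> j < n}" using x \<open>k = n\<close> by simp
      ultimately show ?thesis by blast
    qed
  qed auto
  have f: "finite {(i,j,k). i < j \<and> j < k \<and> k < (n::nat)}"
    by (rule finite_subset[of _ "{..<n} \<times> {..<n} \<times> {..<n}"]) auto
  have f2: "finite {(i,j). i < j \<and> j < (n::nat)}"
    by (rule finite_subset[of _ "{..<n} \<times> {..<n}"]) auto
  have "card {(i,j,k). i < j \<and> j < k \<and> k < Suc n} = card {(i,j,k). i < j \<and> j < k \<and> k < n} + card ((\<lambda>(i,j). (i,j,n)) ` {(i,j). i < j \<and> j < n})"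
    unfolding e by (rule card_Un_disjoint) (use f f2 in auto)
  also have "card ((\<lambda>(i,j). (i,j,n)) ` {(i,j). i < j \<and> j < n}) = n choose 2"
    by (subst card_image) (auto simp: inj_on_def card_pairs)
  finally show ?case using Suc.IH by (simp add: numeral_3_eq_3 numeral_2_eq_2)
qed



lemma bij_cyc: "bij (cycle_of_list cs)"
  using permutation_bijective[OF permutation_of_cycle] .

lemma core:
  assumes xs: "distinct xs" "length xs = n" and n: "n > 2"
  shows "card {u. u permutes set xs \<and> is_k_cycle n u \<and> is_k_cycle 3 (cycle_of_list xs \<circ> inv u)} = n choose 3"
proof -
  define s where "s = cycle_of_list xs"
  define T where "T = {(i,j,k). i < j \<and> j < k \<and> k < (n::nat)}"
  define G where "G = (\<lambda>(i,j,k). cycle_of_list [xs!i, xs!j, xs!k] \<circ> s)"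
  define U where "U = {u. u permutes set xs \<and> is_k_cycle n u \<and> is_k_cycle 3 (s \<circ> inv u)}"
  have eqI: "a < n \<Longrightarrow> b < n \<Longrightarrow> (xs!a = xs!b) = (a = b)" for a b
    using nth_eq_iff_index_eq[OF xs(1)] xs(2) by simp
  have bs: "bij s" unfolding s_def by (rule bij_cyc)
  have sp: "s permutes set xs" unfolding s_def by (rule cycle_permutes)
  have sinv: "s \<circ> inv s = id" using bs by (meson bij_is_surj surj_iff)
  have GU: "G t \<in> U" if t: "t \<in> T" for t
  proof -
    obtain i j k where ijk: "t = (i,j,k)" "i < j" "j < k" "k < n" using t unfolding T_def by auto
    let ?c = "cycle_of_list [xs!i, xs!j, xs!k]"
    have d3: "distinct [xs!i, xs!j, xs!k]" using ijk eqI by auto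
    have "set [xs!i, xs!j, xs!k] \<subseteq> set xs" using ijk xs(2) by auto
    hence "?c permutes set xs" by (meson cycle_permutes permutes_subset)
    hence p1: "G t permutes set xs" unfolding G_def ijk using sp by (simp add: permutes_compose)
    have k1: "is_k_cycle n (G t)" unfolding G_def ijk s_def using good_cycle_gen[OF xs ijk(2-4)] by simp
    have gt: "G t = ?c \<circ> s" unfolding G_def ijk by (simp only: case_prod_conv)
    have "inv (G t) = inv s \<circ> inv ?c" unfolding gt by (rule o_inv_distrib[OF bij_cyc bs])
    hence "s \<circ> inv (G t) = s \<circ> (inv s \<circ> inv ?c)" by simp
    also have "\<dots> = inv ?c" using sinv by (simp add: comp_assoc[symmetric])
    also have "\<dots> = cycle_of_list [xs!i, xs!k, xs!j]" by (rule inv_cyc3[OF d3])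
    finally have "is_k_cycle 3 (s \<circ> inv (G t))" unfolding is_k_cycle_def using d3
      by (intro exI[of _ "[xs!i, xs!k, xs!j]"]) auto
    thus ?thesis using p1 k1 unfolding U_def by simp
  qed
  have UG: "u \<in> G ` T" if u: "u \<in> U" for u
  proof -
    have up: "u permutes set xs" and uk: "is_k_cycle n u" and c3: "is_k_cycle 3 (s \<circ> inv u)"
      using u unfolding U_def by auto
    obtain cs where cs: "distinct cs" "length cs = 3" "s \<circ> inv u = cycle_of_list cs"
      using c3 unfolding is_k_cycle_def by blast
    then obtain a b d where abd: "cs = [a,b,d]" by (auto simp: numeral_3_eq_3 length_Suc_conv)
    let ?c = "cycle_of_list [a,b,d]"
    have d3: "distinct [a,b,d]" using cs abd by simp
    have bu: "bij u" using up by (rule permutes_bij)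
    have cp: "?c permutes set xs" using cs abd sp permutes_inv[OF up] by (metis permutes_compose)
    have "inv u \<circ> u = id" using bu by (simp add: bij_is_inj)
    hence "?c \<circ> u = s" using cs abd by (metis comp_assoc comp_id)
    hence "inv ?c \<circ> ?c \<circ> u = inv ?c \<circ> s" by (simp add: comp_assoc)
    moreover have "inv ?c \<circ> ?c = id" using bij_is_inj[OF bij_cyc[of "[a,b,d]"]] by (rule inv_o_cancel)
    ultimately have ue: "u = cycle_of_list [a,d,b] \<circ> s" using inv_cyc3[OF d3] by simp
    have inset: "x \<in> set xs" if "x \<in> set [a,b,d]" for x
    proof -
      have "?c x \<noteq> x" using cyc_moves[OF d3] that by simp
      thus ?thesis using cp by (meson permutes_not_in)
    qed
    obtain \<alpha> where al: "\<alpha> < n" "a = xs!\<alpha>" using inset[of a] xs(2) by (auto simp: in_set_conv_nth)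
    obtain \<beta> where be: "\<beta> < n" "b = xs!\<beta>" using inset[of b] xs(2) by (auto simp: in_set_conv_nth)
    obtain \<delta> where de: "\<delta> < n" "d = xs!\<delta>" using inset[of d] xs(2) by (auto simp: in_set_conv_nth)
    have dist: "\<alpha> \<noteq> \<beta>" "\<alpha> \<noteq> \<delta>" "\<beta> \<noteq> \<delta>" using d3 al be de by auto
    have dadb: "distinct [a,d,b]" using d3 by auto
    have r1: "cycle_of_list [a,d,b] = cycle_of_list [d,b,a]" by (rule rot3[OF dadb])
    have r2: "cycle_of_list [a,d,b] = cycle_of_list [b,a,d]"
      using rot3[OF dadb] rot3[of d b a] dadb by auto
    consider "\<alpha> < \<delta>" "\<delta> < \<beta>" | "\<delta> < \<beta>" "\<beta> < \<alpha>" | "\<beta> < \<alpha>" "\<alpha> < \<delta>"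
      | "\<alpha> < \<beta>" "\<beta> < \<delta>" | "\<beta> < \<delta>" "\<delta> < \<alpha>" | "\<delta> < \<alpha>" "\<alpha> < \<beta>"
      using dist by linarith
    thus ?thesis
    proof cases
      case 1
      hence "u = G (\<alpha>,\<delta>,\<beta>)" unfolding G_def using ue al be de by simp
      moreover have "(\<alpha>,\<delta>,\<beta>) \<in> T" unfolding T_def using 1 be by simp
      ultimately show ?thesis by blast
    next
      case 2
      hence "u = G (\<delta>,\<beta>,\<alpha>)" unfolding G_def using ue r1 al be de by simp
      moreover have "(\<delta>,\<beta>,\<alpha>) \<in> T" unfolding T_def using 2 al by simp
      ultimately show ?thesis by blast
    next
      case 3
      hence "u = G (\<beta>,\<alpha>,\<delta>)" unfolding G_def using ue r2 al be de by simp
      moreover have "(\<beta>,\<alpha>,\<delta>) \<in> T" unfolding T_def using 3 de by simp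
      ultimately show ?thesis by blast
    next
      case 4
      hence False using bad_cycle_gen[OF xs 4 de(1)] uk ue al be de s_def by simp
      thus ?thesis ..
    next
      case 5
      hence False using bad_cycle_gen[OF xs 5 al(1)] uk ue r2 al be de s_def by simp
      thus ?thesis ..
    next
      case 6
      hence False using bad_cycle_gen[OF xs 6 be(1)] uk ue r1 al be de s_def by simp
      thus ?thesis ..
    qed
  qed
  have inj: "inj_on G T"
  proof (rule inj_onI)
    fix t t' assume t: "t \<in> T" and t': "t' \<in> T" and e: "G t = G t'"
    obtain i j k where ijk: "t = (i,j,k)" "i < j" "j < k" "k < n" using t unfolding T_def by auto
    obtain i' j' k' where ijk': "t' = (i',j',k')" "i' < j'" "j' < k'" "k' < n" using t' unfolding T_def by auto
    have d3: "distinct [xs!i, xs!j, xs!k]" using ijk eqI by auto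
    have d3': "distinct [xs!i', xs!j', xs!k']" using ijk' eqI by auto
    have "cycle_of_list [xs!i, xs!j, xs!k] \<circ> s \<circ> inv s = cycle_of_list [xs!i', xs!j', xs!k'] \<circ> s \<circ> inv s"
      using e unfolding G_def ijk ijk' by simp
    hence "cycle_of_list [xs!i, xs!j, xs!k] = cycle_of_list [xs!i', xs!j', xs!k']"
      using sinv by (simp add: comp_assoc)
    hence "{xs!i, xs!j, xs!k} = {xs!i', xs!j', xs!k'}" using moved_cyc3[OF d3] moved_cyc3[OF d3'] by simp
    hence im: "nth xs ` {i,j,k} = nth xs ` {i',j',k'}" by simp
    have ij: "inj_on (nth xs) {..<n}" using inj_on_nth[OF xs(1)] xs(2) by simp
    have s1: "{i,j,k} \<subseteq> {..<n}" and s2: "{i',j',k'} \<subseteq> {..<n}" using ijk ijk' by auto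
    have S: "{i,j,k} = {i',j',k'}" using inj_on_image_eq_iff[OF ij s1 s2] im by blast
    have "i \<in> {i',j',k'}" "i' \<in> {i,j,k}" using S by blast+
    hence ii: "i = i'" using ijk ijk' by auto
    have "k \<in> {i',j',k'}" "k' \<in> {i,j,k}" using S by blast+
    hence kk: "k = k'" using ijk ijk' by auto
    have "j \<in> {i',j',k'}" using S by blast
    hence "j = j'" using ijk ijk' ii kk by auto
    thus "t = t'" using ijk ijk' ii kk by auto
  qed
  have "U = G ` T" using GU UG by blast
  hence "card U = card T" using inj by (simp add: card_image)
  thus ?thesis unfolding U_def s_def T_def card_triples .
qed



lemma comm_conj:
  assumes "distinct xs" "t permutes N"
  shows "commutator (cycle_of_list xs) t = cycle_of_list xs \<circ> inv (cycle_of_list (map t xs))"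
proof -
  let ?s = "cycle_of_list xs"
  have bt: "bij t" using assms(2) by (rule permutes_bij)
  have bs: "bij ?s" by (rule bij_cyc)
  have e: "cycle_of_list (map t xs) = t \<circ> ?s \<circ> inv t" using conjugation_of_cycle[OF assms(1) bt] by simp
  have bti: "bij (inv t)" using bt by (rule bij_imp_bij_inv)
  have "inv (t \<circ> ?s \<circ> inv t) = inv (inv t) \<circ> inv (t \<circ> ?s)"
    by (rule o_inv_distrib[OF bij_comp[OF bs bt] bti])
  also have "\<dots> = t \<circ> (inv ?s \<circ> inv t)" using o_inv_distrib[OF bt bs] bt by (simp add: inv_inv_eq)
  finally show ?thesis unfolding commutator_def e by (simp add: comp_assoc)
qed

context
  fixes n :: nat and N E
  assumes n: "n > 2"
  defines "N \<equiv> {1..n}" and "E \<equiv> permutations_of_set {1..n}"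
begin

lemma cardN: "card N = n" "finite N" unfolding N_def by auto

lemma E_props: "xs \<in> E \<Longrightarrow> distinct xs \<and> set xs = N \<and> length xs = n"
  unfolding E_def N_def permutations_of_set_def using cardN distinct_card N_def by fastforce

lemma finE: "finite E" unfolding E_def by simp

lemma cyc_E: "xs \<in> E \<Longrightarrow> cycle_of_list xs permutes N \<and> is_k_cycle n (cycle_of_list xs)"
  using E_props[of xs] cycle_permutes[of xs] unfolding is_k_cycle_def by auto

lemma fiber:
  assumes sp: "s permutes N" and sk: "is_k_cycle n s"
  shows "card {xs \<in> E. cycle_of_list xs = s} = n"
proof -
  obtain x0 where x0: "distinct x0" "length x0 = n" "s = cycle_of_list x0" "set x0 = N"
    using kcycle_set[OF sk sp cardN(2) cardN(1)] n by auto
  have "{xs \<in> E. cycle_of_list xs = s} = (\<lambda>k. rotate k x0) ` {..<n}"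
  proof (rule set_eqI, rule iffI)
    fix ys assume "ys \<in> {xs \<in> E. cycle_of_list xs = s}"
    hence ys: "distinct ys" "set ys = N" "length ys = n" "cycle_of_list ys = cycle_of_list x0"
      using E_props x0 by auto
    have "ys!0 \<in> N" using ys n by (metis nth_mem gr_implies_not0 neq0_conv)
    then obtain k where k: "k < n" "ys!0 = x0!k" using x0 by (metis in_set_conv_nth)
    have "ys = rotate k x0"
    proof (rule nth_equalityI)
      show "length ys = length (rotate k x0)" using ys x0 by simp
      fix m assume "m < length ys"
      hence m: "m < n" using ys by simp
      have "ys!m = (cycle_of_list ys ^^ m) (ys!0)"
        using cyc_pow_nth[OF ys(1), of 0 m] ys(3) m by simp
      also have "\<dots> = (cycle_of_list x0 ^^ m) (x0!k)" using ys(4) k by simp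
      also have "\<dots> = x0!((m + k) mod n)" using cyc_pow_nth[OF x0(1), of k m] x0(2) k by simp
      also have "\<dots> = rotate k x0 ! m" using nth_rotate[of m x0 k] x0(2) m by (simp add: add.commute)
      finally show "ys!m = rotate k x0 ! m" .
    qed
    thus "ys \<in> (\<lambda>k. rotate k x0) ` {..<n}" using k by blast
  next
    fix ys assume "ys \<in> (\<lambda>k. rotate k x0) ` {..<n}"
    then obtain k where "k < n" "ys = rotate k x0" by auto
    thus "ys \<in> {xs \<in> E. cycle_of_list xs = s}"
      using x0 cycle_of_list_rotate_independent[OF x0(1), of k]
      unfolding E_def permutations_of_set_def N_def by simp
  qed
  moreover have "inj_on (\<lambda>k. rotate k x0) {..<n}"
  proof (rule inj_onI)
    fix k k' assume "k \<in> {..<n}" "k' \<in> {..<n}" "rotate k x0 = rotate k' x0"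
    hence "k < n" "k' < n" "x0!k = x0!k'" using nth_rotate[of 0 x0 k] nth_rotate[of 0 x0 k'] x0 n by auto
    thus "k = k'" using nth_eq_iff_index_eq[OF x0(1)] x0(2) by simp
  qed
  ultimately show ?thesis by (simp add: card_image)
qed

lemma fiber_pairs:
  assumes fP: "finite P" and P: "\<And>s t. (s,t) \<in> P \<Longrightarrow> s permutes N \<and> is_k_cycle n s"
  shows "card {(xs,t). xs \<in> E \<and> (cycle_of_list xs, t) \<in> P} = n * card P"
proof -
  have e: "{(xs,t). xs \<in> E \<and> (cycle_of_list xs, t) \<in> P} = (\<Union>p\<in>P. {xs \<in> E. cycle_of_list xs = fst p} \<times> {snd p})"
    by auto
  have "card (\<Union>p\<in>P. {xs \<in> E. cycle_of_list xs = fst p} \<times> {snd p}) = (\<Sum>p\<in>P. card ({xs \<in> E. cycle_of_list xs = fst p} \<times> {snd p}))"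
    by (rule card_UN_disjoint) (use fP finE in auto)
  also have "\<dots> = (\<Sum>p\<in>P. n)"
  proof (rule sum.cong)
    fix p assume "p \<in> P"
    hence "fst p permutes N" "is_k_cycle n (fst p)" using P[of "fst p" "snd p"] by auto
    thus "card ({xs \<in> E. cycle_of_list xs = fst p} \<times> {snd p}) = n"
      using fiber by (simp add: card_cartesian_product)
  qed simp
  finally show ?thesis unfolding e by simp
qed

lemma fiber_set:
  assumes fX: "finite X" and X: "\<And>s. s \<in> X \<Longrightarrow> s permutes N \<and> is_k_cycle n s"
  shows "card {xs \<in> E. cycle_of_list xs \<in> X} = n * card X"
proof -
  have "card {(xs,t). xs \<in> E \<and> (cycle_of_list xs, t) \<in> X \<times> {()}} = n * card (X \<times> {()})"
    by (rule fiber_pairs) (use fX X in auto)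
  moreover have "{(xs,t). xs \<in> E \<and> (cycle_of_list xs, t) \<in> X \<times> {()}} = {xs \<in> E. cycle_of_list xs \<in> X} \<times> {()}"
    by auto
  ultimately show ?thesis by (simp add: card_cartesian_product)
qed


lemma main_ctx:
  "card {(s, t). s permutes N \<and> t permutes N \<and> is_k_cycle 3 (commutator s t) \<and> is_k_cycle n s}
     = (n choose 3) * fact n"
proof -
  define A where "A = {(s, t). s permutes N \<and> t permutes N \<and> is_k_cycle 3 (commutator s t) \<and> is_k_cycle n s}"
  define B where "B = {(xs,t). xs \<in> E \<and> (cycle_of_list xs, t) \<in> A}"
  define F where "F = (\<lambda>xs. {ys \<in> E. is_k_cycle 3 (cycle_of_list xs \<circ> inv (cycle_of_list ys))})"
  define D where "D = Sigma E F"
  define h where "h = (\<lambda>(xs::nat list, t::nat\<Rightarrow>nat). (xs, map t xs))"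
  have fA: "finite A"
    by (rule finite_subset[of _ "{s. s permutes N} \<times> {t. t permutes N}"])
       (auto simp: A_def finite_permutations cardN(2))
  have cB: "card B = n * card A" unfolding B_def by (rule fiber_pairs[OF fA]) (auto simp: A_def)
  have hB: "bij_betw h B D"
  proof (rule bij_betw_imageI)
    show "inj_on h B"
    proof (rule inj_onI)
      fix p q assume p: "p \<in> B" and q: "q \<in> B" and e: "h p = h q"
      obtain xs t where pe: "p = (xs,t)" by fastforce
      obtain xs' t' where qe: "q = (xs',t')" by fastforce
      have xx: "xs' = xs" and mm: "map t xs = map t' xs" using e unfolding pe qe h_def by auto
      have tp: "t permutes N" "t' permutes N" "set xs = N" using p q E_props unfolding pe qe xx B_def A_def by auto
      have "t = t'"
      proof
        fix x show "t x = t' x"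
        proof (cases "x \<in> N")
          case True thus ?thesis using mm tp(3) by (metis map_eq_conv)
        next
          case False thus ?thesis using tp by (metis permutes_not_in)
        qed
      qed
      thus "p = q" using pe qe xx by simp
    qed
    show "h ` B = D"
    proof (rule set_eqI, rule iffI)
      fix z assume "z \<in> h ` B"
      then obtain xs t where z: "z = (xs, map t xs)" and xB: "(xs,t) \<in> B" unfolding h_def by auto
      have xs: "distinct xs" "set xs = N" "length xs = n" and xE: "xs \<in> E" using xB E_props unfolding B_def by auto
      have tp: "t permutes N" and c3: "is_k_cycle 3 (commutator (cycle_of_list xs) t)"
        using xB unfolding B_def A_def by auto
      have "distinct (map t xs)" using xs(1) permutes_inj[OF tp] by (simp add: distinct_map inj_on_def inj_def)
      moreover have "set (map t xs) = N" using xs(2) permutes_image[OF tp] by simp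
      ultimately have "map t xs \<in> E" unfolding E_def N_def permutations_of_set_def by simp
      moreover have "is_k_cycle 3 (cycle_of_list xs \<circ> inv (cycle_of_list (map t xs)))"
        using c3 comm_conj[OF xs(1) tp] by simp
      ultimately show "z \<in> D" unfolding z D_def F_def using xE by simp
    next
      fix z assume "z \<in> D"
      then obtain xs ys where z: "z = (xs, ys)" and xE: "xs \<in> E" and yE: "ys \<in> E"
        and c3: "is_k_cycle 3 (cycle_of_list xs \<circ> inv (cycle_of_list ys))"
        unfolding D_def F_def by auto
      have xs: "distinct xs" "set xs = N" "length xs = n" using xE E_props by auto
      have ys: "distinct ys" "set ys = N" "length ys = n" using yE E_props by auto
      define t where "t = (\<lambda>x. if x \<in> N then ys ! (inv_into {..<n} (nth xs) x) else x)"
      have bx: "bij_betw (nth xs) {..<n} N" using bij_betw_nth[OF xs(1)] xs by simp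
      have by': "bij_betw (nth ys) {..<n} N" using bij_betw_nth[OF ys(1)] ys by simp
      have "bij_betw (nth ys \<circ> inv_into {..<n} (nth xs)) N N"
        by (rule bij_betw_trans[OF bij_betw_inv_into[OF bx] by'])
      hence "bij_betw t N N" by (rule bij_betw_cong[THEN iffD1, rotated]) (simp add: t_def)
      hence tp: "t permutes N" by (rule bij_imp_permutes) (simp add: t_def)
      have mt: "map t xs = ys"
      proof (rule nth_equalityI)
        show "length (map t xs) = length ys" using xs ys by simp
        fix m assume "m < length (map t xs)"
        hence m: "m < n" using xs by simp
        have "xs!m \<in> N" using xs m by (metis nth_mem)
        moreover have "inv_into {..<n} (nth xs) (xs!m) = m"
          using bx m by (simp add: bij_betw_def inv_into_f_f)
        ultimately show "map t xs ! m = ys ! m" using m xs by (simp add: t_def)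
      qed
      have "is_k_cycle 3 (commutator (cycle_of_list xs) t)" using c3 comm_conj[OF xs(1) tp] mt by simp
      moreover have "is_k_cycle n (cycle_of_list xs)" "cycle_of_list xs permutes N" using cyc_E[OF xE] by auto
      ultimately have "(xs, t) \<in> B" unfolding B_def A_def using xE tp by simp
      moreover have "h (xs,t) = z" unfolding h_def z case_prod_conv mt by (rule refl)
      ultimately show "z \<in> h ` B" by blast
    qed
  qed
  have cBD: "card B = card D" using bij_betw_same_card[OF hB] .
  have cF: "card (F xs) = n * (n choose 3)" if xE: "xs \<in> E" for xs
  proof -
    define U where "U = {u. u permutes set xs \<and> is_k_cycle n u \<and> is_k_cycle 3 (cycle_of_list xs \<circ> inv u)}"
    have xs: "distinct xs" "set xs = N" "length xs = n" using xE E_props by auto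
    have e: "F xs = {ys \<in> E. cycle_of_list ys \<in> U}"
    proof (rule set_eqI)
      fix ys show "ys \<in> F xs \<longleftrightarrow> ys \<in> {ys \<in> E. cycle_of_list ys \<in> U}"
        using cyc_E[of ys] xs(2) unfolding F_def U_def by blast
    qed
    have fU: "finite U"
      by (rule finite_subset[of _ "{u. u permutes N}"]) (auto simp: U_def xs finite_permutations cardN(2))
    have "card (F xs) = n * card U" unfolding e
      by (rule fiber_set[OF fU]) (simp add: U_def xs(2))
    also have "card U = n choose 3" unfolding U_def using core[OF xs(1) xs(3) n] .
    finally show ?thesis .
  qed
  have "card D = (\<Sum>xs\<in>E. card (F xs))" unfolding D_def
    by (rule card_SigmaI) (use finE in \<open>auto simp: F_def intro: finite_subset\<close>)
  also have "\<dots> = (\<Sum>xs\<in>E. n * (n choose 3))" using cF by simp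
  also have "\<dots> = fact n * (n * (n choose 3))" unfolding E_def using cardN unfolding N_def by simp
  finally have "n * card A = n * ((n choose 3) * fact n)" using cB cBD by (metis mult.commute mult.left_commute)
  hence "card A = (n choose 3) * fact n" using n by (simp only: mult_cancel1) simp
  thus ?thesis unfolding A_def .
qed

end



theorem mainTheorem2:
  fixes n :: nat
  assumes "n > 2"
  shows "card {(s, t). s permutes {1..n} \<and> t permutes {1..n} \<and>
                 is_k_cycle 3 (commutator s t) \<and> is_k_cycle n s}
         = (n choose 3) * fact n"
  using main_ctx[OF assms] by simp

end
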